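(* Let $(X,\le)$ be a globally hyperbolic poset. The set of closed intervals $\mathbf{I}X=\{[a,b]: a,b\in X,\ a\le b\}$, ordered by reverse inclusion ($[a,b]\sqsubseteq[c,d]$ iff $[c,d]\subseteq[a,b]$), is a continuous dcpo (domain), and its way-below relation is given by $[a,b]\ll[c,d]$ iff $a\ll c$ and $d\ll b$ (the latter computed in $(X,\le)$). The space $X$ (with its interval topology) has a countable basis iff $\mathbf{I}X$ is $\omega$-continuous. Finally, $\max(\mathbf{I}X)$, with the relative Scott topology inherited from $\mathbf{I}X$, is homeomorphic to $X$ with its interval topology (via $x\mapsto[x,x]$).
   Context: For a poset $(P,\sqsubseteq)$: a nonempty $S\subseteq P$ is directed if any two elements of $S$ have an upper bound in $S$, and filtered if any two have a lower bound in $S$; $\bigsqcup S$, $\bigwedge S$ denote supremum and infimum when they exist. For $x,y\in P$, $x\ll y$ iff for every directed $S\subseteq P$ that has a supremum, $y\sqsubseteq\bigsqcup S$ implies $x\sqsubseteq s$ for some $s\in S$. Put $\Downarrow x=\{a: a\ll x\}$, $\Uparrow x=\{a: x\ll a\}$. A basis of $P$ is a subset $B$ such that for every $x$, $B\cap\Downarrow x$ contains a directed set with supremum $x$; $P$ is continuous if it has a basis and $\omega$-continuous if it has a countable basis. A dcpo is a poset in which every directed set has a supremum; a continuous dcpo (domain) is a continuous poset that is a dcpo. $\max(P)=\{x: \text{there is no } y\neq x \text{ with } x\sqsubseteq y\}$. The Scott topology consists of upper sets $U$ such that for each directed $S$ with a supremum, $\bigsqcup S\in U$ implies $S\cap U\neq\emptyset$.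 A continuous poset $P$ is bicontinuous if (1) for all $x,y$: $x\ll y$ iff for every filtered $S\subseteq P$ having an infimum, $\bigwedge S\sqsubseteq x$ implies $s\sqsubseteq y$ for some $s\in S$; and (2) for every $x$, $\Uparrow x$ is filtered with infimum $x$. On a bicontinuous poset the sets $(a,b)=\{x:a\ll x\ll b\}$ form a basis for the interval topology. A globally hyperbolic poset is a bicontinuous poset $(X,\le)$ in which every closed interval $[a,b]=\{x:a\le x\le b\}$ is compact in the interval topology. *)

theory Defs
  imports "HOL-Analysis.Analysis"
begin

definition directed :: "'b set \<Rightarrow> ('b \<Rightarrow> 'b \<Rightarrow> bool) \<Rightarrow> 'b set \<Rightarrow> bool" where
  "directed P le S \<longleftrightarrow> S \<subseteq> P \<and> S \<noteq> {} \<and> (\<forall>x\<in>S. \<forall>y\<in>S. \<exists>z\<in>S. le x z \<and> le y z)"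

definition filtered :: "'b set \<Rightarrow> ('b \<Rightarrow> 'b \<Rightarrow> bool) \<Rightarrow> 'b set \<Rightarrow> bool" where
  "filtered P le S \<longleftrightarrow> S \<subseteq> P \<and> S \<noteq> {} \<and> (\<forall>x\<in>S. \<forall>y\<in>S. \<exists>z\<in>S. le z x \<and> le z y)"

definition is_sup :: "'b set \<Rightarrow> ('b \<Rightarrow> 'b \<Rightarrow> bool) \<Rightarrow> 'b set \<Rightarrow> 'b \<Rightarrow> bool" where
  "is_sup P le S s \<longleftrightarrow> s \<in> P \<and> (\<forall>x\<in>S. le x s) \<and> (\<forall>u\<in>P. (\<forall>x\<in>S. le x u) \<longrightarrow> le s u)"

definition is_inf :: "'b set \<Rightarrow> ('b \<Rightarrow> 'b \<Rightarrow> bool) \<Rightarrow> 'b set \<Rightarrow> 'b \<Rightarrow> bool" where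
  "is_inf P le S s \<longleftrightarrow> s \<in> P \<and> (\<forall>x\<in>S. le s x) \<and> (\<forall>u\<in>P. (\<forall>x\<in>S. le u x) \<longrightarrow> le u s)"

definition way_below :: "'b set \<Rightarrow> ('b \<Rightarrow> 'b \<Rightarrow> bool) \<Rightarrow> 'b \<Rightarrow> 'b \<Rightarrow> bool" where
  "way_below P le x y \<longleftrightarrow>
     (\<forall>S s. directed P le S \<and> is_sup P le S s \<and> le y s \<longrightarrow> (\<exists>z\<in>S. le x z))"

definition wb_down :: "'b set \<Rightarrow> ('b \<Rightarrow> 'b \<Rightarrow> bool) \<Rightarrow> 'b \<Rightarrow> 'b set" where
  "wb_down P le x = {a\<in>P. way_below P le a x}"

definition wb_up :: "'b set \<Rightarrow> ('b \<Rightarrow> 'b \<Rightarrow> bool) \<Rightarrow> 'b \<Rightarrow> 'b set" where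
  "wb_up P le x = {a\<in>P. way_below P le x a}"

definition is_basis :: "'b set \<Rightarrow> ('b \<Rightarrow> 'b \<Rightarrow> bool) \<Rightarrow> 'b set \<Rightarrow> bool" where
  "is_basis P le B \<longleftrightarrow> B \<subseteq> P \<and>
     (\<forall>x\<in>P. \<exists>S. S \<subseteq> B \<inter> wb_down P le x \<and> directed P le S \<and> is_sup P le S x)"

definition continuous_poset :: "'b set \<Rightarrow> ('b \<Rightarrow> 'b \<Rightarrow> bool) \<Rightarrow> bool" where
  "continuous_poset P le \<longleftrightarrow> (\<exists>B. is_basis P le B)"

definition omega_continuous :: "'b set \<Rightarrow> ('b \<Rightarrow> 'b \<Rightarrow> bool) \<Rightarrow> bool" where
  "omega_continuous P le \<longleftrightarrow> (\<exists>B. countable B \<and> is_basis P le B)"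

definition dcpo :: "'b set \<Rightarrow> ('b \<Rightarrow> 'b \<Rightarrow> bool) \<Rightarrow> bool" where
  "dcpo P le \<longleftrightarrow> (\<forall>S. directed P le S \<longrightarrow> (\<exists>s. is_sup P le S s))"

definition continuous_dcpo :: "'b set \<Rightarrow> ('b \<Rightarrow> 'b \<Rightarrow> bool) \<Rightarrow> bool" where
  "continuous_dcpo P le \<longleftrightarrow> continuous_poset P le \<and> dcpo P le"

definition maxel :: "'b set \<Rightarrow> ('b \<Rightarrow> 'b \<Rightarrow> bool) \<Rightarrow> 'b set" where
  "maxel P le = {x\<in>P. \<not> (\<exists>y\<in>P. y \<noteq> x \<and> le x y)}"

definition scott_open :: "'b set \<Rightarrow> ('b \<Rightarrow> 'b \<Rightarrow> bool) \<Rightarrow> 'b set \<Rightarrow> bool" where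
  "scott_open P le U \<longleftrightarrow> U \<subseteq> P \<and> (\<forall>x\<in>U. \<forall>y\<in>P. le x y \<longrightarrow> y \<in> U) \<and>
     (\<forall>S s. directed P le S \<and> is_sup P le S s \<and> s \<in> U \<longrightarrow> S \<inter> U \<noteq> {})"

lemma scott_openI:
  assumes "U \<subseteq> P" "\<And>x y. x \<in> U \<Longrightarrow> y \<in> P \<Longrightarrow> le x y \<Longrightarrow> y \<in> U"
    "\<And>S s. directed P le S \<Longrightarrow> is_sup P le S s \<Longrightarrow> s \<in> U \<Longrightarrow> S \<inter> U \<noteq> {}"
  shows "scott_open P le U"
  unfolding scott_open_def using assms by blast

lemma scott_openD:
  assumes "scott_open P le U"
  shows "U \<subseteq> P" "\<And>x y. x \<in> U \<Longrightarrow> y \<in> P \<Longrightarrow> le x y \<Longrightarrow> y \<in> U"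
    "\<And>S s. directed P le S \<Longrightarrow> is_sup P le S s \<Longrightarrow> s \<in> U \<Longrightarrow> S \<inter> U \<noteq> {}"
  using assms unfolding scott_open_def by blast+

lemma istopology_scott_open: "istopology (scott_open P le)"
  unfolding istopology_def
proof (intro conjI allI impI)
  fix U V assume U: "scott_open P le U" and V: "scott_open P le V"
  show "scott_open P le (U \<inter> V)"
  proof (rule scott_openI)
    show "U \<inter> V \<subseteq> P" using scott_openD(1)[OF U] by blast
  next
    fix x y assume "x \<in> U \<inter> V" "y \<in> P" "le x y"
    then show "y \<in> U \<inter> V" using scott_openD(2)[OF U] scott_openD(2)[OF V] by blast
  next
    fix S s assume H: "directed P le S" "is_sup P le S s" "s \<in> U \<inter> V"
    obtain a where a: "a \<in> S" "a \<in> U" using scott_openD(3)[OF U H(1,2)] H(3) by blast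
    obtain b where b: "b \<in> S" "b \<in> V" using scott_openD(3)[OF V H(1,2)] H(3) by blast
    have "\<exists>c\<in>S. le a c \<and> le b c" using H(1) a(1) b(1) unfolding directed_def by blast
    then obtain c where c: "c \<in> S" "le a c" "le b c" by blast
    have cP: "c \<in> P" using H(1) c(1) unfolding directed_def by blast
    have "c \<in> U" using scott_openD(2)[OF U a(2) cP c(2)] .
    moreover have "c \<in> V" using scott_openD(2)[OF V b(2) cP c(3)] .
    ultimately show "S \<inter> (U \<inter> V) \<noteq> {}" using c(1) by blast
  qed
next
  fix K assume K: "\<forall>U\<in>K. scott_open P le U"
  show "scott_open P le (\<Union>K)"
  proof (rule scott_openI)
    show "\<Union>K \<subseteq> P"
    proof
      fix x assume "x \<in> \<Union>K"
      then obtain U where U: "U \<in> K" "x \<in> U" by (rule UnionE)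
      have "scott_open P le U" using K U(1) by (rule bspec)
      then show "x \<in> P" using U(2) by (blast dest: scott_openD(1))
    qed
  next
    fix x y assume xy: "x \<in> \<Union>K" "y \<in> P" "le x y"
    obtain U where U: "U \<in> K" "x \<in> U" using xy(1) by (rule UnionE)
    have "scott_open P le U" using K U(1) by (rule bspec)
    then have "y \<in> U" using U(2) xy(2,3) by (rule scott_openD(2))
    then show "y \<in> \<Union>K" using U(1) by (rule UnionI[rotated])
  next
    fix S s assume H: "directed P le S" "is_sup P le S s" "s \<in> \<Union>K"
    obtain U where U: "U \<in> K" "s \<in> U" using H(3) by (rule UnionE)
    have "scott_open P le U" using K U(1) by (rule bspec)
    then have "S \<inter> U \<noteq> {}" using H(1,2) U(2) by (rule scott_openD(3))
    then show "S \<inter> \<Union>K \<noteq> {}" using U(1) by auto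
  qed
qed

definition scott_topology :: "'b set \<Rightarrow> ('b \<Rightarrow> 'b \<Rightarrow> bool) \<Rightarrow> 'b topology" where
  "scott_topology P le = topology (scott_open P le)"

lemma openin_scott_topology: "openin (scott_topology P le) U \<longleftrightarrow> scott_open P le U"
  by (simp add: scott_topology_def topology_inverse'[OF istopology_scott_open])

abbreviation wbX :: "'a::order \<Rightarrow> 'a \<Rightarrow> bool" where
  "wbX x y \<equiv> way_below UNIV (\<le>) x y"

definition bicontinuous :: "'a::order itself \<Rightarrow> bool" where
  "bicontinuous _ \<longleftrightarrow> continuous_poset (UNIV::'a set) (\<le>) \<and>
     (\<forall>x y::'a. wbX x y \<longleftrightarrow>
        (\<forall>S s. filtered UNIV (\<le>) S \<and> is_inf UNIV (\<le>) S s \<and> s \<le> x \<longrightarrow> (\<exists>z\<in>S. z \<le> y))) \<and>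
     (\<forall>x::'a. filtered UNIV (\<le>) (wb_up UNIV (\<le>) x) \<and> is_inf UNIV (\<le>) (wb_up UNIV (\<le>) x) x)"

definition interval_topology :: "'a::order topology" where
  "interval_topology = topology_generated_by {{x. wbX a x \<and> wbX x b} | a b. True}"

definition globally_hyperbolic :: "'a::order itself \<Rightarrow> bool" where
  "globally_hyperbolic T \<longleftrightarrow> bicontinuous T \<and>
     (\<forall>a b::'a. compactin interval_topology {a..b})"

definition IX :: "'a::order set set" where
  "IX = {{a..b} | a b. a \<le> b}"

definition rev_incl :: "'a set \<Rightarrow> 'a set \<Rightarrow> bool" where
  "rev_incl A B \<longleftrightarrow> B \<subseteq> A"

end

theory Submission
  imports Defs
begin


lemma wb_le: "wbX a b \<Longrightarrow> a \<le> (b::'a::order)"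
proof -
  assume h: "wbX a b"
  have "directed UNIV (\<le>) {b}" unfolding directed_def by auto
  moreover have "is_sup UNIV (\<le>) {b} b" unfolding is_sup_def by auto
  ultimately show ?thesis using h unfolding way_below_def by blast
qed

lemma wb_mono_left: "(a::'a::order) \<le> b \<Longrightarrow> wbX b c \<Longrightarrow> wbX a c"
  unfolding way_below_def by (meson order_trans)

lemma wb_mono_right: "wbX a b \<Longrightarrow> (b::'a::order) \<le> c \<Longrightarrow> wbX a c"
  unfolding way_below_def by (meson order_trans)

lemma is_sup_unique:
  assumes "is_sup P le S s1" "is_sup P le S s2" "\<And>x y. le x y \<Longrightarrow> le y x \<Longrightarrow> x = y"
  shows "s1 = s2" using assms unfolding is_sup_def by blast

lemma directed_finite_ub:
  assumes "directed UNIV (\<le>) S" "finite F" "F \<subseteq> S" "s0 \<in> S"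
  shows "\<exists>z\<in>S. s0 \<le> z \<and> (\<forall>x\<in>F. x \<le> (z::'a::order))"
  using assms(2,3)
proof (induction F rule: finite_induct)
  case empty then show ?case using assms(4) by auto
next
  case (insert x F)
  then obtain z where z: "z \<in> S" "s0 \<le> z" "\<forall>y\<in>F. y \<le> z" by auto
  obtain w where "w \<in> S" "x \<le> w" "z \<le> w" using assms(1) insert z unfolding directed_def by blast
  then show ?case using z by (auto intro: order_trans)
qed

lemma filtered_finite_lb:
  assumes "filtered UNIV (\<le>) S" "finite F" "F \<subseteq> S" "s0 \<in> S"
  shows "\<exists>z\<in>S. z \<le> s0 \<and> (\<forall>x\<in>F. z \<le> (x::'a::order))"
  using assms(2,3)
proof (induction F rule: finite_induct)
  case empty then show ?case using assms(4) by auto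
next
  case (insert x F)
  then obtain z where z: "z \<in> S" "z \<le> s0" "\<forall>y\<in>F. z \<le> y" by auto
  obtain w where "w \<in> S" "w \<le> x" "w \<le> z" using assms(1) insert z unfolding filtered_def by blast
  then show ?case using z by (auto intro: order_trans)
qed

locale gh =
  fixes T :: "'a::order itself"
  assumes ghyp: "globally_hyperbolic T"
begin

lemma cont: "\<exists>C. C \<subseteq> wb_down UNIV (\<le>) x \<and> directed UNIV (\<le>) C \<and> is_sup UNIV (\<le>) C (x::'a)"
proof -
  have "continuous_poset (UNIV::'a set) (\<le>)" using ghyp unfolding globally_hyperbolic_def bicontinuous_def by blast
  then obtain B where "is_basis (UNIV::'a set) (\<le>) B" unfolding continuous_poset_def by blast
  then show ?thesis unfolding is_basis_def by blast
qed

lemma bic1: "wbX (x::'a) y \<longleftrightarrow>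
        (\<forall>S s. filtered UNIV (\<le>) S \<and> is_inf UNIV (\<le>) S s \<and> s \<le> x \<longrightarrow> (\<exists>z\<in>S. z \<le> y))"
  using ghyp unfolding globally_hyperbolic_def bicontinuous_def by blast

lemma bic2: "filtered UNIV (\<le>) (wb_up UNIV (\<le>) (x::'a))" "is_inf UNIV (\<le>) (wb_up UNIV (\<le>) x) x"
  using ghyp unfolding globally_hyperbolic_def bicontinuous_def by blast+

lemma cpt: "compactin interval_topology {a..b::'a}"
  using ghyp unfolding globally_hyperbolic_def by blast

lemma wb_filt: "wbX (x::'a) y \<Longrightarrow> filtered UNIV (\<le>) S \<Longrightarrow> is_inf UNIV (\<le>) S s \<Longrightarrow> s \<le> x \<Longrightarrow> \<exists>z\<in>S. z \<le> y"
  using bic1 by blast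

lemma wb_dir: "wbX (x::'a) y \<Longrightarrow> directed UNIV (\<le>) S \<Longrightarrow> is_sup UNIV (\<le>) S s \<Longrightarrow> y \<le> s \<Longrightarrow> \<exists>z\<in>S. x \<le> z"
  unfolding way_below_def by blast

lemma ex_below: "\<exists>a. wbX a (x::'a)"
proof -
  obtain C where C: "C \<subseteq> wb_down UNIV (\<le>) x" "directed UNIV (\<le>) C" using cont by blast
  then obtain c where "c \<in> C" unfolding directed_def by blast
  then show ?thesis using C unfolding wb_down_def by blast
qed

lemma ex_above: "\<exists>b. wbX (x::'a) b"
proof -
  obtain c where "c \<in> wb_up UNIV (\<le>) x" using bic2(1)[of x] unfolding filtered_def by blast
  then show ?thesis unfolding wb_up_def by blast
qed

lemma interp: assumes "wbX a (x::'a)" shows "\<exists>z. wbX a z \<and> wbX z x"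
proof -
  obtain C where C: "C \<subseteq> wb_down UNIV (\<le>) x" "directed UNIV (\<le>) C" "is_sup UNIV (\<le>) C x" using cont by blast
  define Cc where "Cc c = (SOME D. D \<subseteq> wb_down UNIV (\<le>) c \<and> directed UNIV (\<le>) D \<and> is_sup UNIV (\<le>) D c)" for c :: 'a
  have Cc: "Cc c \<subseteq> wb_down UNIV (\<le>) c \<and> directed UNIV (\<le>) (Cc c) \<and> is_sup UNIV (\<le>) (Cc c) c" for c
    unfolding Cc_def by (rule someI_ex) (rule cont)
  define D where "D = (\<Union>c\<in>C. Cc c)"
  have "directed UNIV (\<le>) D"
    unfolding directed_def
  proof (intro conjI ballI)
    show "D \<subseteq> UNIV" by simp
    obtain c where c: "c \<in> C" using C(2) unfolding directed_def by blast
    then obtain d where "d \<in> Cc c" using Cc[of c] unfolding directed_def by blast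
    then show "D \<noteq> {}" using c unfolding D_def by blast
  next
    fix d1 d2 assume "d1 \<in> D" "d2 \<in> D"
    then obtain c1 c2 where c: "c1 \<in> C" "c2 \<in> C" "d1 \<in> Cc c1" "d2 \<in> Cc c2" unfolding D_def by blast
    then obtain c3 where c3: "c3 \<in> C" "c1 \<le> c3" "c2 \<le> c3" using C(2) unfolding directed_def by blast
    have w1: "wbX d1 c3" using Cc[of c1] c(3) c3(2) wb_mono_right unfolding wb_down_def by blast
    have w2: "wbX d2 c3" using Cc[of c2] c(4) c3(3) wb_mono_right unfolding wb_down_def by blast
    obtain e1 where e1: "e1 \<in> Cc c3" "d1 \<le> e1" using wb_dir[OF w1] Cc[of c3] by blast
    obtain e2 where e2: "e2 \<in> Cc c3" "d2 \<le> e2" using wb_dir[OF w2] Cc[of c3] by blast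
    obtain e3 where "e3 \<in> Cc c3" "e1 \<le> e3" "e2 \<le> e3" using Cc[of c3] e1 e2 unfolding directed_def by blast
    then show "\<exists>z\<in>D. d1 \<le> z \<and> d2 \<le> z" using e1 e2 c3(1) unfolding D_def by (blast intro: order_trans)
  qed
  moreover have "is_sup UNIV (\<le>) D x"
    unfolding is_sup_def
  proof (intro conjI ballI impI)
    show "x \<in> UNIV" by simp
  next
    fix d assume "d \<in> D"
    then obtain c where c: "c \<in> C" "d \<in> Cc c" unfolding D_def by blast
    have "d \<le> c" using Cc[of c] c(2) unfolding is_sup_def by blast
    moreover have "c \<le> x" using C(3) c(1) unfolding is_sup_def by blast
    ultimately show "d \<le> x" by simp
  next
    fix u assume u: "\<forall>d\<in>D. d \<le> u"
    have "\<forall>c\<in>C. c \<le> u"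
    proof
      fix c assume "c \<in> C"
      then have "\<forall>d\<in>Cc c. d \<le> u" using u unfolding D_def by blast
      then show "c \<le> u" using Cc[of c] unfolding is_sup_def by blast
    qed
    then show "x \<le> u" using C(3) unfolding is_sup_def by blast
  qed
  ultimately obtain d where d: "d \<in> D" "a \<le> d" using wb_dir[OF assms] by blast
  then obtain c where c: "c \<in> C" "d \<in> Cc c" unfolding D_def by blast
  have "wbX d c" using Cc[of c] c(2) unfolding wb_down_def by blast
  then have "wbX a c" using d(2) wb_mono_left by blast
  moreover have "wbX c x" using C(1) c(1) unfolding wb_down_def by blast
  ultimately show ?thesis by blast
qed

lemma interp': assumes "wbX (x::'a) b" shows "\<exists>z. wbX x z \<and> wbX z b"
proof -
  define E where "E = wb_up UNIV (\<le>) x"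
  have E: "filtered UNIV (\<le>) E" "is_inf UNIV (\<le>) E x" unfolding E_def using bic2 by auto
  define F where "F = (\<Union>e\<in>E. wb_up UNIV (\<le>) e)"
  have "filtered UNIV (\<le>) F"
    unfolding filtered_def
  proof (intro conjI ballI)
    show "F \<subseteq> UNIV" by simp
    obtain e where e: "e \<in> E" using E(1) unfolding filtered_def by blast
    then obtain f where "f \<in> wb_up UNIV (\<le>) e" using bic2(1)[of e] unfolding filtered_def by blast
    then show "F \<noteq> {}" using e unfolding F_def by blast
  next
    fix f1 f2 assume "f1 \<in> F" "f2 \<in> F"
    then obtain e1 e2 where e: "e1 \<in> E" "e2 \<in> E" "f1 \<in> wb_up UNIV (\<le>) e1" "f2 \<in> wb_up UNIV (\<le>) e2" unfolding F_def by blast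
    then obtain e3 where e3: "e3 \<in> E" "e3 \<le> e1" "e3 \<le> e2" using E(1) unfolding filtered_def by blast
    have "f1 \<in> wb_up UNIV (\<le>) e3" "f2 \<in> wb_up UNIV (\<le>) e3" using e e3 wb_mono_left unfolding wb_up_def by blast+
    then obtain g where "g \<in> wb_up UNIV (\<le>) e3" "g \<le> f1" "g \<le> f2" using bic2(1)[of e3] unfolding filtered_def by blast
    then show "\<exists>z\<in>F. z \<le> f1 \<and> z \<le> f2" using e3(1) unfolding F_def by blast
  qed
  moreover have "is_inf UNIV (\<le>) F x"
    unfolding is_inf_def
  proof (intro conjI ballI impI)
    show "x \<in> UNIV" by simp
  next
    fix f assume "f \<in> F"
    then obtain e where e: "e \<in> E" "wbX e f" unfolding F_def wb_up_def by blast
    have "wbX x e" using e(1) unfolding E_def wb_up_def by blast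
    then show "x \<le> f" using e(2) wb_le order_trans by blast
  next
    fix l assume l: "\<forall>f\<in>F. l \<le> f"
    have "\<forall>e\<in>E. l \<le> e"
    proof
      fix e assume "e \<in> E"
      then have "\<forall>f\<in>wb_up UNIV (\<le>) e. l \<le> f" using l unfolding F_def by blast
      then show "l \<le> e" using bic2(2)[of e] unfolding is_inf_def by blast
    qed
    then show "l \<le> x" using E(2) unfolding is_inf_def by blast
  qed
  ultimately obtain f where f: "f \<in> F" "f \<le> b" using wb_filt[OF assms] by blast
  then obtain e where e: "e \<in> E" "wbX e f" unfolding F_def wb_up_def by blast
  have "wbX e b" using e(2) f(2) wb_mono_right by blast
  moreover have "wbX x e" using e(1) unfolding E_def wb_up_def by blast
  ultimately show ?thesis by blast
qed


definition oint :: "'a \<Rightarrow> 'a \<Rightarrow> 'a set" where "oint a b = {x. wbX a x \<and> wbX x b}"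

lemma open_oint: "openin interval_topology (oint a b)"
  unfolding interval_topology_def oint_def by (rule topology_generated_by_Basis) blast

lemma topspace_it: "topspace (interval_topology :: 'a topology) = UNIV"
proof -
  have "x \<in> \<Union>{{x. wbX a x \<and> wbX x b} | a b. True}" for x :: 'a
    using ex_below[of x] ex_above[of x] by blast
  then show ?thesis unfolding interval_topology_def topology_generated_by_topspace by blast
qed

lemma below_two: assumes "wbX a1 (x::'a)" "wbX a2 x" shows "\<exists>c. a1 \<le> c \<and> a2 \<le> c \<and> wbX c x"
proof -
  obtain C where C: "C \<subseteq> wb_down UNIV (\<le>) x" "directed UNIV (\<le>) C" "is_sup UNIV (\<le>) C x" using cont by blast
  obtain c1 where c1: "c1 \<in> C" "a1 \<le> c1" using wb_dir[OF assms(1) C(2,3)] by blast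
  obtain c2 where c2: "c2 \<in> C" "a2 \<le> c2" using wb_dir[OF assms(2) C(2,3)] by blast
  obtain c3 where "c3 \<in> C" "c1 \<le> c3" "c2 \<le> c3" using C(2) c1 c2 unfolding directed_def by blast
  then show ?thesis using c1 c2 C(1) unfolding wb_down_def by (blast intro: order_trans)
qed

lemma above_two: assumes "wbX (x::'a) b1" "wbX x b2" shows "\<exists>e. e \<le> b1 \<and> e \<le> b2 \<and> wbX x e"
proof -
  obtain e1 where e1: "e1 \<in> wb_up UNIV (\<le>) x" "e1 \<le> b1" using wb_filt[OF assms(1) bic2] by blast
  obtain e2 where e2: "e2 \<in> wb_up UNIV (\<le>) x" "e2 \<le> b2" using wb_filt[OF assms(2) bic2] by blast
  obtain e3 where "e3 \<in> wb_up UNIV (\<le>) x" "e3 \<le> e1" "e3 \<le> e2" using bic2(1)[of x] e1 e2 unfolding filtered_def by blast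
  then show ?thesis using e1 e2 unfolding wb_up_def by (blast intro: order_trans)
qed

lemma nbhd: assumes "openin interval_topology W" "(x::'a) \<in> W"
  shows "\<exists>a b. x \<in> oint a b \<and> oint a b \<subseteq> W"
proof -
  have "generate_topology_on {{x. wbX a x \<and> wbX x b} | a b. True} W"
    using assms(1) unfolding interval_topology_def by (rule openin_topology_generated_by)
  then show ?thesis using assms(2)
  proof (induction arbitrary: x rule: generate_topology_on.induct)
    case Empty then show ?case by simp
  next
    case (Int U V)
    obtain a1 b1 where 1: "x \<in> oint a1 b1" "oint a1 b1 \<subseteq> U" using Int by blast
    obtain a2 b2 where 2: "x \<in> oint a2 b2" "oint a2 b2 \<subseteq> V" using Int by blast
    obtain c where c: "a1 \<le> c" "a2 \<le> c" "wbX c x" using below_two 1(1) 2(1) unfolding oint_def by blast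
    obtain e where e: "e \<le> b1" "e \<le> b2" "wbX x e" using above_two 1(1) 2(1) unfolding oint_def by blast
    have "oint c e \<subseteq> oint a1 b1" "oint c e \<subseteq> oint a2 b2"
      using c e wb_mono_left wb_mono_right unfolding oint_def by blast+
    then show ?case using 1 2 c e unfolding oint_def by blast
  next
    case (UN K)
    then obtain k where "k \<in> K" "x \<in> k" by blast
    then show ?case using UN by blast
  next
    case (Basis s)
    then show ?case unfolding oint_def by blast
  qed
qed

lemma closed_up: "closedin interval_topology {z. (x::'a) \<le> z}"
  unfolding closedin_def topspace_it
proof (intro conjI)
  show "openin interval_topology (UNIV - {z. x \<le> z})"
    unfolding openin_subopen[of _ "UNIV - _"]
  proof
    fix y assume "y \<in> UNIV - {z. x \<le> z}"
    then have ny: "\<not> x \<le> y" by simp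
    have "\<exists>b\<in>wb_up UNIV (\<le>) y. \<not> x \<le> b"
      using bic2(2)[of y] ny unfolding is_inf_def by blast
    then obtain b where b: "wbX y b" "\<not> x \<le> b" unfolding wb_up_def by blast
    obtain a where a: "wbX a y" using ex_below by blast
    have "oint a b \<subseteq> UNIV - {z. x \<le> z}"
      using b(2) wb_le order_trans unfolding oint_def by blast
    then show "\<exists>T. openin interval_topology T \<and> y \<in> T \<and> T \<subseteq> UNIV - {z. x \<le> z}"
      using open_oint a b unfolding oint_def by blast
  qed
qed simp

lemma closed_down: "closedin interval_topology {z. z \<le> (u::'a)}"
  unfolding closedin_def topspace_it
proof (intro conjI)
  show "openin interval_topology (UNIV - {z. z \<le> u})"
    unfolding openin_subopen[of _ "UNIV - _"]
  proof
    fix y assume "y \<in> UNIV - {z. z \<le> u}"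
    then have ny: "\<not> y \<le> u" by simp
    obtain C where C: "C \<subseteq> wb_down UNIV (\<le>) y" "directed UNIV (\<le>) C" "is_sup UNIV (\<le>) C y" using cont by blast
    have "\<exists>c\<in>C. \<not> c \<le> u"
      using C(3) ny unfolding is_sup_def by blast
    then obtain a where a: "wbX a y" "\<not> a \<le> u" using C(1) unfolding wb_down_def by blast
    obtain b where b: "wbX y b" using ex_above by blast
    have "oint a b \<subseteq> UNIV - {z. z \<le> u}"
      using a(2) wb_le order_trans unfolding oint_def by blast
    then show "\<exists>T. openin interval_topology T \<and> y \<in> T \<and> T \<subseteq> UNIV - {z. z \<le> u}"
      using open_oint a b unfolding oint_def by blast
  qed
qed simp

lemma sup_exists:
  assumes S: "directed UNIV (\<le>) S" and b: "\<forall>s\<in>S. s \<le> (b::'a)"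
  shows "\<exists>x. is_sup UNIV (\<le>) S x"
proof -
  obtain s0 where s0: "s0 \<in> S" using S unfolding directed_def by blast
  define Ub where "Ub = {u. \<forall>s\<in>S. s \<le> u}"
  define L where "L = (\<Inter>u\<in>Ub. {z. z \<le> u})"
  have bUb: "b \<in> Ub" using b unfolding Ub_def by blast
  have Lc: "closedin interval_topology L" unfolding L_def
    using bUb closed_down by (intro closedin_Inter) auto
  define U where "U = (\<lambda>s. {z. s \<le> z} \<inter> L) ` S"
  have "{s0..b} \<inter> \<Inter>U \<noteq> {}"
  proof (rule cpt[unfolded compactin_fip, THEN conjunct2, rule_format], intro conjI allI impI ballI)
    fix C assume "C \<in> U" then show "closedin interval_topology C"
      unfolding U_def using Lc closed_up by auto
  next
    fix F assume F: "finite F \<and> F \<subseteq> U"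
    then obtain S' where S': "S' \<subseteq> S" "finite S'" "F = (\<lambda>s. {z. s \<le> z} \<inter> L) ` S'"
      unfolding U_def by (meson finite_subset_image)
    obtain z where z: "z \<in> S" "s0 \<le> z" "\<forall>x\<in>S'. x \<le> z" using directed_finite_ub[OF S S'(2,1) s0] by blast
    have "z \<in> L" unfolding L_def Ub_def using z(1) by blast
    moreover have "z \<le> b" using b z(1) by blast
    ultimately have "z \<in> {s0..b} \<inter> \<Inter>F" using z S'(3) by auto
    then show "{s0..b} \<inter> \<Inter>F \<noteq> {}" by blast
  qed
  then obtain x where x: "x \<in> \<Inter>U" by blast
  have "is_sup UNIV (\<le>) S x" unfolding is_sup_def
  proof (intro conjI ballI impI)
    fix s assume "s \<in> S" then show "s \<le> x" using x unfolding U_def by blast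
  next
    fix u assume "\<forall>s\<in>S. s \<le> u"
    then have "u \<in> Ub" unfolding Ub_def by blast
    then show "x \<le> u" using x s0 unfolding U_def L_def by blast
  qed simp
  then show ?thesis by blast
qed

lemma inf_exists:
  assumes S: "filtered UNIV (\<le>) S" and b: "\<forall>s\<in>S. (b::'a) \<le> s"
  shows "\<exists>x. is_inf UNIV (\<le>) S x"
proof -
  obtain s0 where s0: "s0 \<in> S" using S unfolding filtered_def by blast
  define Ub where "Ub = {u. \<forall>s\<in>S. u \<le> s}"
  define L where "L = (\<Inter>u\<in>Ub. {z. u \<le> z})"
  have bUb: "b \<in> Ub" using b unfolding Ub_def by blast
  have Lc: "closedin interval_topology L" unfolding L_def
    using bUb closed_up by (intro closedin_Inter) auto
  define U where "U = (\<lambda>s. {z. z \<le> s} \<inter> L) ` S"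
  have "{b..s0} \<inter> \<Inter>U \<noteq> {}"
  proof (rule cpt[unfolded compactin_fip, THEN conjunct2, rule_format], intro conjI allI impI ballI)
    fix C assume "C \<in> U" then show "closedin interval_topology C"
      unfolding U_def using Lc closed_down by auto
  next
    fix F assume F: "finite F \<and> F \<subseteq> U"
    then obtain S' where S': "S' \<subseteq> S" "finite S'" "F = (\<lambda>s. {z. z \<le> s} \<inter> L) ` S'"
      unfolding U_def by (meson finite_subset_image)
    obtain z where z: "z \<in> S" "z \<le> s0" "\<forall>x\<in>S'. z \<le> x" using filtered_finite_lb[OF S S'(2,1) s0] by blast
    have "z \<in> L" unfolding L_def Ub_def using z(1) by blast
    moreover have "b \<le> z" using b z(1) by blast
    ultimately have "z \<in> {b..s0} \<inter> \<Inter>F" using z S'(3) by auto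
    then show "{b..s0} \<inter> \<Inter>F \<noteq> {}" by blast
  qed
  then obtain x where x: "x \<in> \<Inter>U" by blast
  have "is_inf UNIV (\<le>) S x" unfolding is_inf_def
  proof (intro conjI ballI impI)
    fix s assume "s \<in> S" then show "x \<le> s" using x unfolding U_def by blast
  next
    fix u assume "\<forall>s\<in>S. u \<le> s"
    then have "u \<in> Ub" unfolding Ub_def by blast
    then show "u \<le> x" using x s0 unfolding U_def L_def by blast
  qed simp
  then show ?thesis by blast
qed




lemma IX_mem: "I \<in> IX \<longleftrightarrow> (\<exists>a b. a \<le> b \<and> I = {a..b::'a})"
  unfolding IX_def by blast

lemma Icc_in_IX: "a \<le> b \<Longrightarrow> {a..b::'a} \<in> IX"
  unfolding IX_def by blast

lemma rev_incl_Icc: "(c::'a) \<le> d \<Longrightarrow> rev_incl {a..b} {c..d} \<longleftrightarrow> a \<le> c \<and> d \<le> b"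
  unfolding rev_incl_def by auto

definition lows :: "'a set set \<Rightarrow> 'a set" where "lows D = {a. \<exists>b. a \<le> b \<and> {a..b} \<in> D}"
definition highs :: "'a set set \<Rightarrow> 'a set" where "highs D = {b. \<exists>a. a \<le> b \<and> {a..b} \<in> D}"

lemma dir_IX:
  assumes D: "directed IX rev_incl D"
  shows "\<exists>x y. x \<le> y \<and> directed UNIV (\<le>) (lows D) \<and> filtered UNIV (\<le>) (highs D)
     \<and> is_sup UNIV (\<le>) (lows D) x \<and> is_inf UNIV (\<le>) (highs D) y \<and> is_sup IX rev_incl D {x..y}"
proof -
  have DIX: "D \<subseteq> IX" and Dne: "D \<noteq> {}" using D unfolding directed_def by auto
  have Dform: "\<And>I. I \<in> D \<Longrightarrow> \<exists>a b. a \<le> b \<and> I = {a..b}" using DIX IX_mem by blast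
  have Ddir: "\<And>I J. I \<in> D \<Longrightarrow> J \<in> D \<Longrightarrow> \<exists>K\<in>D. K \<subseteq> I \<and> K \<subseteq> J"
    using D unfolding directed_def rev_incl_def by blast
  obtain I0 where I0: "I0 \<in> D" using Dne by blast
  then obtain a0 b0 where ab0: "a0 \<le> b0" "I0 = {a0..b0}" using Dform by blast
  have a0: "a0 \<in> lows D" and b0: "b0 \<in> highs D" using I0 ab0 unfolding lows_def highs_def by auto
  have lh: "a \<le> b" if H: "a \<in> lows D" "b \<in> highs D" for a b
  proof -
    obtain b' a' where "a \<le> b'" "{a..b'} \<in> D" "a' \<le> b" "{a'..b} \<in> D" using H unfolding lows_def highs_def by blast
    moreover obtain K where "K \<in> D" "K \<subseteq> {a..b'}" "K \<subseteq> {a'..b}" using Ddir calculation by blast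
    moreover obtain p q where "p \<le> q" "K = {p..q}" using Dform calculation by blast
    ultimately show ?thesis by (auto intro: order_trans)
  qed
  have dl: "directed UNIV (\<le>) (lows D)" unfolding directed_def
  proof (intro conjI ballI)
    fix a1 a2 assume "a1 \<in> lows D" "a2 \<in> lows D"
    then obtain b1 b2 where "a1 \<le> b1" "{a1..b1} \<in> D" "a2 \<le> b2" "{a2..b2} \<in> D" unfolding lows_def by blast
    moreover obtain K where "K \<in> D" "K \<subseteq> {a1..b1}" "K \<subseteq> {a2..b2}" using Ddir calculation by blast
    moreover obtain p q where "p \<le> q" "K = {p..q}" using Dform calculation by blast
    ultimately show "\<exists>z\<in>lows D. a1 \<le> z \<and> a2 \<le> z" unfolding lows_def by auto
  qed (use a0 in auto)
  have fh: "filtered UNIV (\<le>) (highs D)" unfolding filtered_def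
  proof (intro conjI ballI)
    fix a1 a2 assume "a1 \<in> highs D" "a2 \<in> highs D"
    then obtain b1 b2 where "b1 \<le> a1" "{b1..a1} \<in> D" "b2 \<le> a2" "{b2..a2} \<in> D" unfolding highs_def by blast
    moreover obtain K where "K \<in> D" "K \<subseteq> {b1..a1}" "K \<subseteq> {b2..a2}" using Ddir calculation by blast
    moreover obtain p q where "p \<le> q" "K = {p..q}" using Dform calculation by blast
    ultimately show "\<exists>z\<in>highs D. z \<le> a1 \<and> z \<le> a2" unfolding highs_def by auto
  qed (use b0 in auto)
  obtain x where x: "is_sup UNIV (\<le>) (lows D) x" using sup_exists[OF dl, of b0] lh b0 by blast
  obtain y where y: "is_inf UNIV (\<le>) (highs D) y" using inf_exists[OF fh, of a0] lh a0 by blast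
  have xb: "x \<le> b" if "b \<in> highs D" for b using x lh that unfolding is_sup_def by blast
  have xy: "x \<le> y" using y xb unfolding is_inf_def by blast
  have "is_sup IX rev_incl D {x..y}" unfolding is_sup_def
  proof (intro conjI ballI impI)
    show "{x..y} \<in> IX" using xy by (rule Icc_in_IX)
  next
    fix I assume I: "I \<in> D"
    then obtain a b where ab: "a \<le> b" "I = {a..b}" using Dform by blast
    then have "a \<in> lows D" "b \<in> highs D" using I unfolding lows_def highs_def by auto
    then have "a \<le> x" "y \<le> b" using x y unfolding is_sup_def is_inf_def by auto
    then show "rev_incl I {x..y}" using ab xy rev_incl_Icc by auto
  next
    fix J assume J: "J \<in> IX" "\<forall>I\<in>D. rev_incl I J"
    then obtain c d where cd: "c \<le> d" "J = {c..d}" using IX_mem by blast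
    have "\<forall>a\<in>lows D. a \<le> c" using J(2) cd unfolding lows_def by (auto simp: rev_incl_Icc)
    then have "x \<le> c" using x unfolding is_sup_def by blast
    moreover have "\<forall>b\<in>highs D. d \<le> b" using J(2) cd unfolding highs_def by (auto simp: rev_incl_Icc)
    then have "d \<le> y" using y unfolding is_inf_def by blast
    ultimately show "rev_incl {x..y} J" using cd rev_incl_Icc by auto
  qed
  then show ?thesis using xy dl fh x y by blast
qed

lemma sup_IX_unique: "is_sup IX rev_incl D s1 \<Longrightarrow> is_sup IX rev_incl D s2 \<Longrightarrow> s1 = (s2::'a set)"
proof -
  assume h1: "is_sup IX rev_incl D s1" and h2: "is_sup IX rev_incl D s2"
  have "\<And>x y. rev_incl x y \<Longrightarrow> rev_incl y x \<Longrightarrow> x = (y::'a set)" unfolding rev_incl_def by blast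
  then show ?thesis using is_sup_unique[OF h1 h2] by blast
qed

lemma wb_IX_I:
  assumes ab: "a \<le> b" and cd: "c \<le> d" and ac: "wbX a c" and db: "wbX d (b::'a)"
  shows "way_below IX rev_incl {a..b} {c..d}"
  unfolding way_below_def
proof (intro allI impI)
  fix D s assume H: "directed IX rev_incl D \<and> is_sup IX rev_incl D s \<and> rev_incl {c..d} s"
  have HD: "directed IX rev_incl D" and Hs: "is_sup IX rev_incl D s" and Hcd: "rev_incl {c..d} s" using H by auto
  obtain x y where xy: "x \<le> y" "directed UNIV (\<le>) (lows D)" "filtered UNIV (\<le>) (highs D)"
     "is_sup UNIV (\<le>) (lows D) x" "is_inf UNIV (\<le>) (highs D) y" "is_sup IX rev_incl D {x..y}"
    using dir_IX[OF HD] by blast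
  have "s = {x..y}" using sup_IX_unique[OF Hs xy(6)] .
  then have "c \<le> x" "y \<le> d" using Hcd xy(1) rev_incl_Icc by auto
  obtain a1 where a1: "a1 \<in> lows D" "a \<le> a1" using wb_dir[OF ac xy(2,4) \<open>c \<le> x\<close>] by blast
  obtain b1 where b1: "b1 \<in> highs D" "b1 \<le> b" using wb_filt[OF db xy(3,5) \<open>y \<le> d\<close>] by blast
  obtain q where q: "a1 \<le> q" "{a1..q} \<in> D" using a1 unfolding lows_def by blast
  obtain p where p: "p \<le> b1" "{p..b1} \<in> D" using b1 unfolding highs_def by blast
  have "\<exists>K\<in>D. rev_incl {a1..q} K \<and> rev_incl {p..b1} K" using HD q(2) p(2) unfolding directed_def by blast
  then obtain K where K: "K \<in> D" "rev_incl {a1..q} K" "rev_incl {p..b1} K" by blast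
  have "K \<in> IX" using K(1) HD unfolding directed_def by blast
  then obtain u v where uv: "u \<le> v" "K = {u..v}" using IX_mem by blast
  have "a1 \<le> u" "v \<le> b1" using K(2,3) uv rev_incl_Icc by auto
  then have "a \<le> u" "v \<le> b" using a1 b1 by (auto intro: order_trans)
  then have "rev_incl {a..b} K" using uv rev_incl_Icc by auto
  then show "\<exists>z\<in>D. rev_incl {a..b} z" using K by blast
qed

lemma approx:
  assumes cd: "(c::'a) \<le> d"
    and C: "C \<subseteq> wb_down UNIV (\<le>) c" "directed UNIV (\<le>) C" "is_sup UNIV (\<le>) C c"
    and E: "E \<subseteq> wb_up UNIV (\<le>) d" "filtered UNIV (\<le>) E" "is_inf UNIV (\<le>) E d"
  defines "S \<equiv> {{p..q} | p q. p \<in> C \<and> q \<in> E}"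
  shows "S \<subseteq> wb_down IX rev_incl {c..d}" "directed IX rev_incl S" "is_sup IX rev_incl S {c..d}"
proof -
  have pq: "p \<le> q" if "p \<in> C" "q \<in> E" for p q
  proof -
    have "p \<le> c" using C that unfolding wb_down_def using wb_le by blast
    moreover have "d \<le> q" using E that unfolding wb_up_def using wb_le by blast
    ultimately show ?thesis using cd by (auto intro: order_trans)
  qed
  show "S \<subseteq> wb_down IX rev_incl {c..d}"
  proof
    fix I assume "I \<in> S"
    then obtain p q where I: "I = {p..q}" "p \<in> C" "q \<in> E" unfolding S_def by blast
    have "way_below IX rev_incl {p..q} {c..d}"
      using wb_IX_I[OF pq[OF I(2,3)] cd] C(1) E(1) I unfolding wb_down_def wb_up_def by blast
    then show "I \<in> wb_down IX rev_incl {c..d}" using I pq Icc_in_IX unfolding wb_down_def by blast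
  qed
  show "directed IX rev_incl S" unfolding directed_def
  proof (intro conjI ballI)
    show "S \<subseteq> IX" unfolding S_def using pq Icc_in_IX by blast
    obtain p q where "p \<in> C" "q \<in> E" using C(2) E(2) unfolding directed_def filtered_def by blast
    then show "S \<noteq> {}" unfolding S_def by blast
  next
    fix I J assume "I \<in> S" "J \<in> S"
    then obtain p q p' q' where IJ: "I = {p..q}" "p \<in> C" "q \<in> E" "J = {p'..q'}" "p' \<in> C" "q' \<in> E"
      unfolding S_def by blast
    obtain p'' where p'': "p'' \<in> C" "p \<le> p''" "p' \<le> p''" using C(2) IJ unfolding directed_def by blast
    obtain q'' where q'': "q'' \<in> E" "q'' \<le> q" "q'' \<le> q'" using E(2) IJ unfolding filtered_def by blast
    have "rev_incl I {p''..q''}" "rev_incl J {p''..q''}" using IJ p'' q'' pq rev_incl_Icc by auto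
    moreover have "{p''..q''} \<in> S" unfolding S_def using p'' q'' by blast
    ultimately show "\<exists>K\<in>S. rev_incl I K \<and> rev_incl J K" by blast
  qed
  show "is_sup IX rev_incl S {c..d}" unfolding is_sup_def
  proof (intro conjI ballI impI)
    show "{c..d} \<in> IX" using cd by (rule Icc_in_IX)
  next
    fix I assume "I \<in> S"
    then obtain p q where I: "I = {p..q}" "p \<in> C" "q \<in> E" unfolding S_def by blast
    have "p \<le> c" "d \<le> q" using C(3) E(3) I unfolding is_sup_def is_inf_def by auto
    then show "rev_incl I {c..d}" using I cd rev_incl_Icc by auto
  next
    fix J assume J: "J \<in> IX" "\<forall>I\<in>S. rev_incl I J"
    then obtain x y where xy: "x \<le> y" "J = {x..y}" using IX_mem by blast
    have "\<forall>p\<in>C. \<forall>q\<in>E. p \<le> x \<and> y \<le> q"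
    proof (intro ballI)
      fix p q assume "p \<in> C" "q \<in> E"
      then have "rev_incl {p..q} J" using J unfolding S_def by blast
      then show "p \<le> x \<and> y \<le> q" using xy rev_incl_Icc by auto
    qed
    moreover obtain p0 q0 where "p0 \<in> C" "q0 \<in> E" using C(2) E(2) unfolding directed_def filtered_def by blast
    ultimately have "\<forall>p\<in>C. p \<le> x" "\<forall>q\<in>E. y \<le> q" by blast+
    then have "c \<le> x" "y \<le> d" using C(3) E(3) unfolding is_sup_def is_inf_def by auto
    then show "rev_incl {c..d} J" using xy cd rev_incl_Icc by auto
  qed
qed

lemma wb_IX_iff:
  assumes ab: "a \<le> b" and cd: "c \<le> (d::'a)"
  shows "way_below IX rev_incl {a..b} {c..d} \<longleftrightarrow> wbX a c \<and> wbX d b"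
proof
  assume W: "way_below IX rev_incl {a..b} {c..d}"
  obtain C where C: "C \<subseteq> wb_down UNIV (\<le>) c" "directed UNIV (\<le>) C" "is_sup UNIV (\<le>) C c" using cont by blast
  note A = approx[OF cd C order_refl bic2]
  have r: "rev_incl {c..d} {c..d}" unfolding rev_incl_def by simp
  have "\<exists>I\<in>{{p..q} | p q. p \<in> C \<and> q \<in> wb_up UNIV (\<le>) d}. rev_incl {a..b} I"
    using W[unfolded way_below_def, rule_format, OF conjI[OF A(2) conjI[OF A(3) r]]] .
  then obtain I where I: "I \<in> {{p..q} | p q. p \<in> C \<and> q \<in> wb_up UNIV (\<le>) d}" "rev_incl {a..b} I" by blast
  then obtain p q where pq: "I = {p..q}" "p \<in> C" "q \<in> wb_up UNIV (\<le>) d" by blast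
  have "wbX p c" "wbX d q" using pq C(1) unfolding wb_down_def wb_up_def by auto
  then have "p \<le> c" "d \<le> q" using wb_le by auto
  then have "p \<le> q" using cd by (meson order_trans)
  then have "a \<le> p" "q \<le> b" using I(2) pq rev_incl_Icc by auto
  then show "wbX a c \<and> wbX d b" using \<open>wbX p c\<close> \<open>wbX d q\<close> wb_mono_left[of a p c] wb_mono_right[of d q b] by blast
next
  assume "wbX a c \<and> wbX d b" then show "way_below IX rev_incl {a..b} {c..d}" using wb_IX_I ab cd by blast
qed

lemma IX_basis: "is_basis (IX::'a set set) rev_incl IX" unfolding is_basis_def
proof (intro conjI ballI)
  fix J :: "'a set" assume "J \<in> IX"
  then obtain c d where cd: "c \<le> d" "J = {c..d}" using IX_mem by blast
  obtain C where C: "C \<subseteq> wb_down UNIV (\<le>) c" "directed UNIV (\<le>) C" "is_sup UNIV (\<le>) C c" using cont by blast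
  note A = approx[OF cd(1) C order_refl bic2]
  have "{{p..q} | p q. p \<in> C \<and> q \<in> wb_up UNIV (\<le>) d} \<subseteq> IX"
    using A(2) unfolding directed_def by blast
  then show "\<exists>S. S \<subseteq> IX \<inter> wb_down IX rev_incl J \<and> directed IX rev_incl S \<and> is_sup IX rev_incl S J"
    using A cd by blast
qed simp

lemma IX_cont_dcpo: "continuous_dcpo (IX::'a set set) rev_incl"
  unfolding continuous_dcpo_def continuous_poset_def dcpo_def
  using IX_basis dir_IX by blast





lemma dir_refine:
  assumes D: "directed IX rev_incl D" and a1: "a1 \<in> lows D" and b1: "b1 \<in> highs D"
  shows "\<exists>u v. u \<le> v \<and> {u..v} \<in> D \<and> a1 \<le> u \<and> v \<le> (b1::'a)"
proof -
  obtain q where q: "a1 \<le> q" "{a1..q} \<in> D" using a1 unfolding lows_def by blast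
  obtain p where p: "p \<le> b1" "{p..b1} \<in> D" using b1 unfolding highs_def by blast
  have "\<exists>K\<in>D. rev_incl {a1..q} K \<and> rev_incl {p..b1} K" using D q(2) p(2) unfolding directed_def by blast
  then obtain K where K: "K \<in> D" "rev_incl {a1..q} K" "rev_incl {p..b1} K" by blast
  have "K \<in> IX" using K(1) D unfolding directed_def by blast
  then obtain u v where uv: "u \<le> v" "K = {u..v}" using IX_mem by blast
  have "a1 \<le> u" "v \<le> b1" using K(2,3) uv rev_incl_Icc by auto
  then show ?thesis using uv K(1) by blast
qed

lemma omega_imp_sc:
  assumes "omega_continuous (IX::'a set set) rev_incl"
  shows "second_countable (interval_topology :: 'a topology)"
proof -
  obtain B where B: "countable B" "is_basis (IX::'a set set) rev_incl B"
    using assms unfolding omega_continuous_def by blast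
  define lo where "lo I = (SOME a. \<exists>b. a \<le> b \<and> I = {a..b})" for I :: "'a set"
  define hi where "hi I = (SOME b. \<exists>a. a \<le> b \<and> I = {a..b})" for I :: "'a set"
  have lohi: "lo {u..v} = u \<and> hi {u..v} = v" if "u \<le> v" for u v
  proof -
    have "lo {u..v} = u" unfolding lo_def
      by (rule some_equality) (use that in auto)
    moreover have "hi {u..v} = v" unfolding hi_def
      by (rule some_equality) (use that in auto)
    ultimately show ?thesis by blast
  qed
  show ?thesis unfolding second_countable_def
  proof (rule exI[where x="(\<lambda>I. oint (lo I) (hi I)) ` B"], intro conjI allI impI ballI)
    show "countable ((\<lambda>I. oint (lo I) (hi I)) ` B)" using B(1) by simp
  next
    fix V assume "V \<in> (\<lambda>I. oint (lo I) (hi I)) ` B"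
    then show "openin interval_topology V" using open_oint by blast
  next
    fix U and x :: 'a assume H: "openin interval_topology U \<and> x \<in> U"
    then obtain a b where ab: "x \<in> oint a b" "oint a b \<subseteq> U" using nbhd[OF conjunct1[OF H] conjunct2[OF H]] by blast
    have xx: "{x..x} \<in> IX" by (rule Icc_in_IX) simp
    have "\<exists>S. S \<subseteq> B \<inter> wb_down IX rev_incl {x..x} \<and> directed IX rev_incl S \<and> is_sup IX rev_incl S {x..x}"
      using B(2)[unfolded is_basis_def, THEN conjunct2, rule_format, OF xx] .
    then obtain D where D: "D \<subseteq> B \<inter> wb_down IX rev_incl {x..x}" "directed IX rev_incl D" "is_sup IX rev_incl D {x..x}"
      by blast
    obtain x' y' where xy: "x' \<le> y'" "directed UNIV (\<le>) (lows D)" "filtered UNIV (\<le>) (highs D)"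
     "is_sup UNIV (\<le>) (lows D) x'" "is_inf UNIV (\<le>) (highs D) y'" "is_sup IX rev_incl D {x'..y'}"
      using dir_IX[OF D(2)] by blast
    have "{x'..y'} = {x..x}" using sup_IX_unique[OF xy(6) D(3)] .
    then have "x' = x" "y' = x" using xy(1) by auto
    have ax: "wbX a x" and xb: "wbX x b" using ab(1) unfolding oint_def by auto
    obtain a1 where a1: "a1 \<in> lows D" "a \<le> a1" using wb_dir[OF ax xy(2,4)] \<open>x' = x\<close> by blast
    obtain b1 where b1: "b1 \<in> highs D" "b1 \<le> b" using wb_filt[OF xb xy(3,5)] \<open>y' = x\<close> by blast
    obtain u v where uv: "u \<le> v" "{u..v} \<in> D" "a1 \<le> u" "v \<le> b1" using dir_refine[OF D(2) a1(1) b1(1)] by blast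
    have "way_below IX rev_incl {u..v} {x..x}" using D(1) uv(2) unfolding wb_down_def by blast
    then have ux: "wbX u x" "wbX x v" using wb_IX_iff[OF uv(1), of x x] by auto
    have "a \<le> u" "v \<le> b" using a1 uv b1 by (auto intro: order_trans)
    then have "oint u v \<subseteq> oint a b" unfolding oint_def using wb_mono_left[of a u] wb_mono_right[of _ v b] by blast
    moreover have "oint u v = oint (lo {u..v}) (hi {u..v})" using lohi[OF uv(1)] by simp
    moreover have "{u..v} \<in> B" using D(1) uv(2) by blast
    moreover have "x \<in> oint u v" using ux unfolding oint_def by simp
    ultimately show "\<exists>V\<in>(\<lambda>I. oint (lo I) (hi I)) ` B. x \<in> V \<and> V \<subseteq> U" using ab(2) by blast
  qed
qed

lemma dense_interp:
  assumes Q: "\<And>W x. openin interval_topology W \<Longrightarrow> x \<in> W \<Longrightarrow> \<exists>q\<in>Q. q \<in> W"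
    and ax: "wbX a (x::'a)"
  shows "\<exists>q\<in>Q. wbX a q \<and> wbX q x"
proof -
  obtain z where "wbX a z" "wbX z x" using interp[OF ax] by blast
  then have "z \<in> oint a x" unfolding oint_def by simp
  then obtain q where "q \<in> Q" "q \<in> oint a x" using Q[OF open_oint] by blast
  then show ?thesis unfolding oint_def by blast
qed

lemma sc_imp_omega:
  assumes "second_countable (interval_topology :: 'a topology)"
  shows "omega_continuous (IX::'a set set) rev_incl"
proof -
  obtain \<B> where Bs0: "countable \<B> \<and> (\<forall>V\<in>\<B>. openin (interval_topology :: 'a topology) V) \<and>
    (\<forall>U x. openin (interval_topology :: 'a topology) U \<and> x \<in> U \<longrightarrow> (\<exists>V\<in>\<B>. x \<in> V \<and> V \<subseteq> U))"
    using assms[unfolded second_countable_def] by blast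
  note Bs = conjunct1[OF Bs0] conjunct1[OF conjunct2[OF Bs0]] conjunct2[OF conjunct2[OF Bs0]]
  define Q where "Q = (\<lambda>V. SOME x. x \<in> V) ` {V\<in>\<B>. V \<noteq> {}}"
  have Qc: "countable Q" unfolding Q_def by (rule countable_image, rule countable_subset[OF _ Bs(1)]) blast
  have Qd: "\<exists>q\<in>Q. q \<in> W" if "openin interval_topology W" "x \<in> W" for W x
  proof -
    have "\<exists>V\<in>\<B>. x \<in> V \<and> V \<subseteq> W" using Bs(3) that by blast
    then obtain V where V: "V \<in> \<B>" "x \<in> V" "V \<subseteq> W" by blast
    then have "(SOME x. x \<in> V) \<in> V" by (meson someI)
    moreover have "(SOME x. x \<in> V) \<in> Q" unfolding Q_def using V by blast
    ultimately show ?thesis using V(3) by blast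
  qed
  have DI: "\<exists>q\<in>Q. wbX a q \<and> wbX q x" if "wbX a x" for a x :: 'a
  proof (rule dense_interp[OF _ that])
    show "\<exists>q\<in>Q. q \<in> W" if "openin interval_topology W" "y \<in> W" for W y using Qd[OF that] .
  qed
  have Dx: "directed UNIV (\<le>) (Q \<inter> wb_down UNIV (\<le>) x) \<and> is_sup UNIV (\<le>) (Q \<inter> wb_down UNIV (\<le>) x) x" for x
  proof (intro conjI)
    show "directed UNIV (\<le>) (Q \<inter> wb_down UNIV (\<le>) x)" unfolding directed_def
    proof (intro conjI ballI)
      obtain a where "wbX a x" using ex_below by blast
      then obtain q where "q \<in> Q" "wbX q x" using DI by blast
      then show "Q \<inter> wb_down UNIV (\<le>) x \<noteq> {}" unfolding wb_down_def by blast
    next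
      fix q1 q2 assume "q1 \<in> Q \<inter> wb_down UNIV (\<le>) x" "q2 \<in> Q \<inter> wb_down UNIV (\<le>) x"
      then have "wbX q1 x" "wbX q2 x" unfolding wb_down_def by auto
      then obtain c where c: "q1 \<le> c" "q2 \<le> c" "wbX c x" using below_two by blast
      then obtain q where q: "q \<in> Q" "wbX c q" "wbX q x" using DI by blast
      then have "c \<le> q" using wb_le by blast
      then have "q1 \<le> q" "q2 \<le> q" using c by (auto intro: order_trans)
      then show "\<exists>z\<in>Q \<inter> wb_down UNIV (\<le>) x. q1 \<le> z \<and> q2 \<le> z" using q unfolding wb_down_def by blast
    qed simp
    show "is_sup UNIV (\<le>) (Q \<inter> wb_down UNIV (\<le>) x) x" unfolding is_sup_def
    proof (intro conjI ballI impI)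
      fix q assume "q \<in> Q \<inter> wb_down UNIV (\<le>) x" then show "q \<le> x" unfolding wb_down_def using wb_le by blast
    next
      fix u assume u: "\<forall>q\<in>Q \<inter> wb_down UNIV (\<le>) x. q \<le> u"
      show "x \<le> u"
      proof (rule ccontr)
        assume nx: "\<not> x \<le> u"
        obtain C where C: "C \<subseteq> wb_down UNIV (\<le>) x" "directed UNIV (\<le>) C" "is_sup UNIV (\<le>) C x" using cont by blast
        have "\<exists>c\<in>C. \<not> c \<le> u" using C(3) nx unfolding is_sup_def by blast
        then obtain c where c: "wbX c x" "\<not> c \<le> u" using C(1) unfolding wb_down_def by blast
        then obtain q where q: "q \<in> Q" "wbX c q" "wbX q x" using DI by blast
        then have "q \<le> u" using u unfolding wb_down_def by blast
        moreover have "c \<le> q" using q wb_le by blast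
        ultimately show False using c(2) by (meson order_trans)
      qed
    qed simp
  qed
  have Ex: "filtered UNIV (\<le>) (Q \<inter> wb_up UNIV (\<le>) x) \<and> is_inf UNIV (\<le>) (Q \<inter> wb_up UNIV (\<le>) x) x" for x
  proof (intro conjI)
    show "filtered UNIV (\<le>) (Q \<inter> wb_up UNIV (\<le>) x)" unfolding filtered_def
    proof (intro conjI ballI)
      obtain b where "wbX x b" using ex_above by blast
      then obtain q where "q \<in> Q" "wbX x q" using DI by blast
      then show "Q \<inter> wb_up UNIV (\<le>) x \<noteq> {}" unfolding wb_up_def by blast
    next
      fix q1 q2 assume "q1 \<in> Q \<inter> wb_up UNIV (\<le>) x" "q2 \<in> Q \<inter> wb_up UNIV (\<le>) x"
      then have "wbX x q1" "wbX x q2" unfolding wb_up_def by auto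
      then obtain e where e: "e \<le> q1" "e \<le> q2" "wbX x e" using above_two by blast
      then obtain q where q: "q \<in> Q" "wbX x q" "wbX q e" using DI by blast
      then have "q \<le> e" using wb_le by blast
      then have "q \<le> q1" "q \<le> q2" using e by (auto intro: order_trans)
      then show "\<exists>z\<in>Q \<inter> wb_up UNIV (\<le>) x. z \<le> q1 \<and> z \<le> q2" using q unfolding wb_up_def by blast
    qed simp
    show "is_inf UNIV (\<le>) (Q \<inter> wb_up UNIV (\<le>) x) x" unfolding is_inf_def
    proof (intro conjI ballI impI)
      fix q assume "q \<in> Q \<inter> wb_up UNIV (\<le>) x" then show "x \<le> q" unfolding wb_up_def using wb_le by blast
    next
      fix l assume l: "\<forall>q\<in>Q \<inter> wb_up UNIV (\<le>) x. l \<le> q"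
      show "l \<le> x"
      proof (rule ccontr)
        assume nx: "\<not> l \<le> x"
        have "\<exists>e\<in>wb_up UNIV (\<le>) x. \<not> l \<le> e" using bic2(2)[of x] nx unfolding is_inf_def by blast
        then obtain e where e: "wbX x e" "\<not> l \<le> e" unfolding wb_up_def by blast
        then obtain q where q: "q \<in> Q" "wbX x q" "wbX q e" using DI by blast
        then have "l \<le> q" using l unfolding wb_up_def by blast
        moreover have "q \<le> e" using q wb_le by blast
        ultimately show False using e(2) by (meson order_trans)
      qed
    qed simp
  qed
  define Bc where "Bc = (\<lambda>(p, q). {p..q}) ` {(p, q). p \<in> Q \<and> q \<in> Q \<and> p \<le> q}"
  have "countable {(p, q). p \<in> Q \<and> q \<in> Q \<and> p \<le> q}"
    by (rule countable_subset[of _ "Q \<times> Q"]) (auto simp: Qc)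
  then have "countable Bc" unfolding Bc_def by simp
  moreover have "is_basis IX rev_incl Bc" unfolding is_basis_def
  proof (intro conjI ballI)
    show "Bc \<subseteq> IX"
    proof
      fix J assume "J \<in> Bc"
      then show "J \<in> IX" unfolding Bc_def using Icc_in_IX by auto
    qed
  next
    fix J :: "'a set" assume "J \<in> IX"
    then obtain c d where cd: "c \<le> d" "J = {c..d}" using IX_mem by blast
    have s1: "Q \<inter> wb_down UNIV (\<le>) c \<subseteq> wb_down UNIV (\<le>) c" by blast
    have s2: "Q \<inter> wb_up UNIV (\<le>) d \<subseteq> wb_up UNIV (\<le>) d" by blast
    note A = approx[OF cd(1) s1 conjunct1[OF Dx] conjunct2[OF Dx] s2 conjunct1[OF Ex] conjunct2[OF Ex]]
    define S where "S = {{p..q} | p q. p \<in> Q \<inter> wb_down UNIV (\<le>) c \<and> q \<in> Q \<inter> wb_up UNIV (\<le>) d}"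
    have "S \<subseteq> Bc"
    proof
      fix I assume "I \<in> S"
      then obtain p q where pq: "I = {p..q}" "p \<in> Q" "wbX p c" "q \<in> Q" "wbX d q"
        unfolding S_def wb_down_def wb_up_def by blast
      have "p \<le> c" "d \<le> q" using pq wb_le by auto
      then have "p \<le> q" using cd(1) by (meson order_trans)
      then have "(p, q) \<in> {(p, q). p \<in> Q \<and> q \<in> Q \<and> p \<le> q}" using pq by simp
      then show "I \<in> Bc" unfolding Bc_def pq(1) by (rule image_eqI[rotated]) simp
    qed
    then have "S \<subseteq> Bc \<inter> wb_down IX rev_incl J" using A(1) cd(2) unfolding S_def by blast
    then show "\<exists>S. S \<subseteq> Bc \<inter> wb_down IX rev_incl J \<and> directed IX rev_incl S \<and> is_sup IX rev_incl S J"
      using A(2,3) cd(2) unfolding S_def by blast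
  qed
  ultimately show ?thesis unfolding omega_continuous_def by blast
qed


lemma maxel_IX: "maxel (IX::'a set set) rev_incl = range (\<lambda>x. {x..x})"
proof
  show "maxel (IX::'a set set) rev_incl \<subseteq> range (\<lambda>x::'a. {x..x})"
  proof
    fix J :: "'a set" assume J: "J \<in> maxel IX rev_incl"
    then have "J \<in> IX" unfolding maxel_def by blast
    then obtain c d where cd: "c \<le> d" "J = {c..d}" using IX_mem by blast
    have "{c..c} \<in> IX" by (rule Icc_in_IX) simp
    moreover have "rev_incl J {c..c}" unfolding cd(2) rev_incl_def using cd(1) by auto
    moreover have "\<not> (\<exists>K\<in>IX. K \<noteq> J \<and> rev_incl J K)" using J unfolding maxel_def by simp
    ultimately have "{c..c} = J" by blast
    then show "J \<in> range (\<lambda>x. {x..x})" by blast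
  qed
next
  show "range (\<lambda>x::'a. {x..x}) \<subseteq> maxel (IX::'a set set) rev_incl"
  proof
    fix J assume "J \<in> range (\<lambda>x::'a. {x..x})"
    then obtain x where x: "J = {x..x}" by blast
    have "\<not> (\<exists>K\<in>IX. K \<noteq> J \<and> rev_incl J K)"
    proof
      assume "\<exists>K\<in>IX. K \<noteq> J \<and> rev_incl J K"
      then obtain K where K: "K \<in> IX" "K \<noteq> J" "rev_incl J K" by blast
      obtain c d where cd: "c \<le> d" "K = {c..d}" using IX_mem[THEN iffD1, OF K(1)] by blast
      have "rev_incl {x..x} {c..d}" using K(3) x cd(2) by simp
      then have "x \<le> c \<and> d \<le> x" using rev_incl_Icc[OF cd(1), of x x] by blast
      then have "x \<le> c" "d \<le> x" by simp_all
      then have "c = x" "d = x" using cd(1) by (meson order.trans order.antisym)+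
      then show False using K(2) cd x by simp
    qed
    moreover have "J \<in> IX" unfolding x by (rule Icc_in_IX) simp
    ultimately show "J \<in> maxel IX rev_incl" unfolding maxel_def by simp
  qed
qed

lemma topspace_scott: "topspace (scott_topology (IX::'a set set) rev_incl) = IX"
proof
  show "topspace (scott_topology (IX::'a set set) rev_incl) \<subseteq> IX"
    unfolding topspace_def openin_scott_topology scott_open_def by blast
next
  have "scott_open (IX::'a set set) rev_incl IX"
  proof (rule scott_openI)
    fix S :: "'a set set" and s assume "directed IX rev_incl S" "is_sup IX rev_incl S s" "s \<in> IX"
    then show "S \<inter> IX \<noteq> {}" unfolding directed_def by blast
  qed auto
  then show "(IX::'a set set) \<subseteq> topspace (scott_topology IX rev_incl)"
    unfolding topspace_def openin_scott_topology by blast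
qed

lemma homeo: "homeomorphic_map (interval_topology :: 'a topology)
        (subtopology (scott_topology IX rev_incl) (maxel IX rev_incl)) (\<lambda>x. {x..x})"
proof (rule bijective_open_imp_homeomorphic_map)
  have tsub: "topspace (subtopology (scott_topology (IX::'a set set) rev_incl) (maxel IX rev_incl)) = range (\<lambda>x::'a. {x..x})"
    using topspace_scott maxel_IX unfolding maxel_def by auto
  show "(\<lambda>x. {x..x}) ` topspace interval_topology =
    topspace (subtopology (scott_topology (IX::'a set set) rev_incl) (maxel IX rev_incl))"
    unfolding tsub topspace_it by simp
  show "inj_on (\<lambda>x::'a. {x..x}) (topspace interval_topology)"
    by (auto simp: inj_on_def)
  show "continuous_map interval_topology
     (subtopology (scott_topology (IX::'a set set) rev_incl) (maxel IX rev_incl)) (\<lambda>x. {x..x})"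
    unfolding continuous_map_def
  proof (intro conjI allI impI)
    show "(\<lambda>x. {x..x}) \<in> topspace interval_topology \<rightarrow>
       topspace (subtopology (scott_topology (IX::'a set set) rev_incl) (maxel IX rev_incl))"
      unfolding tsub by blast
  next
    fix U assume "openin (subtopology (scott_topology (IX::'a set set) rev_incl) (maxel IX rev_incl)) U"
    then obtain V where V: "scott_open IX rev_incl V" "U = V \<inter> maxel IX rev_incl"
      unfolding openin_subtopology openin_scott_topology by blast
    have eq: "{x \<in> topspace interval_topology. {x..x} \<in> U} = {x. {x..x} \<in> V}"
      unfolding topspace_it V(2) maxel_IX by blast
    show "openin interval_topology {x \<in> topspace interval_topology. {x..x} \<in> U}"
      unfolding eq openin_subopen[of _ "{x. {x..x} \<in> V}"]
    proof
      fix x :: 'a assume x: "x \<in> {x. {x..x} \<in> V}"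
      obtain C where C: "C \<subseteq> wb_down UNIV (\<le>) x" "directed UNIV (\<le>) C" "is_sup UNIV (\<le>) C x" using cont by blast
      note A = approx[OF order_refl C order_refl bic2]
      have "{{p..q} | p q. p \<in> C \<and> q \<in> wb_up UNIV (\<le>) x} \<inter> V \<noteq> {}"
        using scott_openD(3)[OF V(1) A(2,3)] x by blast
      then obtain p q where pq: "p \<in> C" "q \<in> wb_up UNIV (\<le>) x" "{p..q} \<in> V" by blast
      have px: "wbX p x" and xq: "wbX x q" using pq C(1) unfolding wb_down_def wb_up_def by auto
      have "oint p q \<subseteq> {x. {x..x} \<in> V}"
      proof
        fix z assume "z \<in> oint p q"
        then have "p \<le> z" "z \<le> q" unfolding oint_def using wb_le by auto
        then have "rev_incl {p..q} {z..z}" unfolding rev_incl_def by auto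
        moreover have "{z..z} \<in> IX" by (rule Icc_in_IX) simp
        ultimately show "z \<in> {x. {x..x} \<in> V}" using scott_openD(2)[OF V(1) pq(3)] by blast
      qed
      moreover have "x \<in> oint p q" using px xq unfolding oint_def by simp
      ultimately show "\<exists>T. openin interval_topology T \<and> x \<in> T \<and> T \<subseteq> {x. {x..x} \<in> V}"
        using open_oint by blast
    qed
  qed
  show "open_map interval_topology
     (subtopology (scott_topology (IX::'a set set) rev_incl) (maxel IX rev_incl)) (\<lambda>x. {x..x})"
    unfolding open_map_def
  proof (intro allI impI)
    fix W :: "'a set" assume W: "openin interval_topology W"
    define V where "V = {J. \<exists>a b c d. J = {c..d} \<and> c \<le> d \<and> wbX a c \<and> wbX d b \<and> oint a b \<subseteq> W}"
    have "scott_open IX rev_incl V"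
    proof (rule scott_openI)
      show "V \<subseteq> IX" unfolding V_def using Icc_in_IX by blast
    next
      fix J J' :: "'a set" assume J: "J \<in> V" "J' \<in> IX" "rev_incl J J'"
      then obtain a b c d where abcd: "J = {c..d}" "c \<le> d" "wbX a c" "wbX d b" "oint a b \<subseteq> W"
        unfolding V_def by blast
      obtain c' d' where cd': "c' \<le> d'" "J' = {c'..d'}" using J(2) IX_mem by blast
      then have "c \<le> c'" "d' \<le> d" using J(3) abcd(1) rev_incl_Icc by auto
      then have "wbX a c'" "wbX d' b" using abcd(3,4) wb_mono_left[of d' d b] wb_mono_right[of a c c'] by auto
      then show "J' \<in> V" unfolding V_def using cd' abcd(5) by blast
    next
      fix S s assume H: "directed IX rev_incl S" "is_sup IX rev_incl S s" "s \<in> V"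
      then obtain a b c d where abcd: "s = {c..d}" "c \<le> d" "wbX a c" "wbX d b" "oint a b \<subseteq> W"
        unfolding V_def by blast
      obtain x y where xy: "x \<le> y" "directed UNIV (\<le>) (lows S)" "filtered UNIV (\<le>) (highs S)"
         "is_sup UNIV (\<le>) (lows S) x" "is_inf UNIV (\<le>) (highs S) y" "is_sup IX rev_incl S {x..y}"
        using dir_IX[OF H(1)] by blast
      have "{x..y} = {c..d}" using sup_IX_unique[OF xy(6) H(2)] abcd(1) by simp
      then have "x = c" "y = d" using xy(1) by auto
      obtain z where z: "wbX a z" "wbX z c" using interp[OF abcd(3)] by blast
      obtain z' where z': "wbX d z'" "wbX z' b" using interp'[OF abcd(4)] by blast
      obtain a1 where a1: "a1 \<in> lows S" "z \<le> a1" using wb_dir[OF z(2) xy(2,4)] \<open>x = c\<close> by blast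
      obtain b1 where b1: "b1 \<in> highs S" "b1 \<le> z'" using wb_filt[OF z'(1) xy(3,5)] \<open>y = d\<close> by blast
      obtain u v where uv: "u \<le> v" "{u..v} \<in> S" "a1 \<le> u" "v \<le> b1" using dir_refine[OF H(1) a1(1) b1(1)] by blast
      have "z \<le> u" "v \<le> z'" using a1 b1 uv by (auto intro: order_trans)
      then have "wbX a u" "wbX v b" using z(1) z'(2) wb_mono_right[of a z u] wb_mono_left[of v z' b] by auto
      then have "{u..v} \<in> V" unfolding V_def using uv(1) abcd(5) by blast
      then show "S \<inter> V \<noteq> {}" using uv(2) by blast
    qed
    moreover have "(\<lambda>x. {x..x}) ` W = V \<inter> maxel IX rev_incl"
    proof
      show "(\<lambda>x. {x..x}) ` W \<subseteq> V \<inter> maxel IX rev_incl"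
      proof
        fix J assume "J \<in> (\<lambda>x. {x..x}) ` W"
        then obtain x where x: "x \<in> W" "J = {x..x}" by blast
        obtain a b where ab: "x \<in> oint a b" "oint a b \<subseteq> W" using nbhd[OF W x(1)] by blast
        have "J \<in> V" unfolding V_def using ab x(2) unfolding oint_def by blast
        moreover have "J \<in> maxel IX rev_incl" unfolding maxel_IX using x(2) by blast
        ultimately show "J \<in> V \<inter> maxel IX rev_incl" by blast
      qed
    next
      show "V \<inter> maxel IX rev_incl \<subseteq> (\<lambda>x. {x..x}) ` W"
      proof
        fix J assume J: "J \<in> V \<inter> maxel IX rev_incl"
        then obtain x where x: "J = {x..x}" unfolding maxel_IX by blast
        obtain a b c d where abcd: "J = {c..d}" "c \<le> d" "wbX a c" "wbX d b" "oint a b \<subseteq> W"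
          using J unfolding V_def by blast
        have "{c..d} = {x..x}" using abcd(1) x by (rule trans[OF sym])
        then have "c = x \<and> d = x" using abcd(2) unfolding Icc_eq_Icc by blast
        then have "c = x" "d = x" by simp_all
        then have "x \<in> oint a b" using abcd(3,4) unfolding oint_def by simp
        then show "J \<in> (\<lambda>x. {x..x}) ` W" using abcd(5) x by blast
      qed
    qed
    ultimately show "openin (subtopology (scott_topology IX rev_incl) (maxel IX rev_incl)) ((\<lambda>x. {x..x}) ` W)"
      unfolding openin_subtopology openin_scott_topology by blast
  qed
qed



end

theorem mainTheorem3:
  assumes "globally_hyperbolic TYPE('a::order)"
  shows "continuous_dcpo (IX :: 'a set set) rev_incl
    \<and> (\<forall>a b c d :: 'a. a \<le> b \<longrightarrow> c \<le> d \<longrightarrow>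
          (way_below IX rev_incl {a..b} {c..d} \<longleftrightarrow> wbX a c \<and> wbX d b))
    \<and> (second_countable (interval_topology :: 'a topology) \<longleftrightarrow> omega_continuous (IX :: 'a set set) rev_incl)
    \<and> homeomorphic_map (interval_topology :: 'a topology)
        (subtopology (scott_topology IX rev_incl) (maxel IX rev_incl)) (\<lambda>x. {x..x})"
proof -
  interpret gh "TYPE('a)" by unfold_locales (rule assms)
  show ?thesis using IX_cont_dcpo wb_IX_iff omega_imp_sc sc_imp_omega homeo by blast
qed

end
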